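(* Let $n\ge2$, $m,m'\in\mathbb{Z}$ with $m'\neq0$, $\gcd(n,m)=1$ and $\gcd(n,m+m')=1$. Then $$\Delta_{T(n,m+m')}(q)=\frac{1}{[n]_q\,(1-q^{m'})}\,\zeta(q^{m'},\sigma_{n,m};\beta_{n,q})^{-1},$$ where $\zeta(q^{m'},\sigma_{n,m};\beta_{n,q})$ denotes the value of the rational function $\zeta(s,\sigma_{n,m};\beta_{n,q})$ at $s=q^{m'}$, and $\Delta_{T(n,m+m')}(q)=\frac{(1-q)(1-q^{n(m+m')})}{(1-q^n)(1-q^{m+m'})}$ is the representative of the Alexander polynomial of the torus knot $T(n,m+m')$ normalized so that $\operatorname{Res}_{s=1}\zeta(s,\sigma_{n,m+m'};\beta_{n,q})=-[n]_q^{-1}\Delta_{T(n,m+m')}(q)^{-1}$.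
   Context: $\sigma_{n,m}:=(\sigma_1\cdots\sigma_{n-1})^m\in\mathrm{B}_n$, whose closure is the torus knot $T(n,m)$. The Burau representation $\beta_{n,q}$ is given by $\beta_{n,q}(\sigma_i)=I_{i-1}\oplus\begin{pmatrix}1-q&1\\ q&0\end{pmatrix}\oplus I_{n-i-1}$ over $\mathbb{Z}[q^{\pm1}]$, and $\zeta(s,\sigma;\beta_{n,q}):=\det(I_n-\beta_{n,q}(\sigma)s)^{-1}$. $[n]_q=(1-q^n)/(1-q)$. *)

theory Defs
  imports Complex_Main "Jordan_Normal_Form.Determinant"
begin

text \<open>Burau representation beta_{n,q}, evaluated at a complex number q (q nonzero).
  Generators sigma_i, 1 <= i <= n-1; 0-based matrix indices, so the 2x2 block
  sits at rows/columns i-1, i.\<close>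

definition burau_gen :: "nat \<Rightarrow> complex \<Rightarrow> nat \<Rightarrow> complex mat" where
  "burau_gen n q i = mat n n (\<lambda>(r, c).
     if r = i - 1 \<and> c = i - 1 then 1 - q
     else if r = i - 1 \<and> c = i then 1
     else if r = i \<and> c = i - 1 then q
     else if r = i \<and> c = i then 0
     else if r = c then 1 else 0)"

text \<open>Image of sigma_i^{-1}: the inverse of the block [[1-q,1],[q,0]] is [[0,1/q],[1,1-1/q]].\<close>
definition burau_gen_inv :: "nat \<Rightarrow> complex \<Rightarrow> nat \<Rightarrow> complex mat" where
  "burau_gen_inv n q i = mat n n (\<lambda>(r, c).
     if r = i - 1 \<and> c = i - 1 then 0
     else if r = i - 1 \<and> c = i then 1 / q
     else if r = i \<and> c = i - 1 then 1
     else if r = i \<and> c = i then 1 - 1 / q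
     else if r = c then 1 else 0)"

definition mat_list_prod :: "nat \<Rightarrow> complex mat list \<Rightarrow> complex mat" where
  "mat_list_prod n As = foldr (\<lambda>A B. A * B) As (1\<^sub>m n)"

text \<open>beta_{n,q}(sigma_{n,m}) with sigma_{n,m} = (sigma_1 ... sigma_{n-1})^m, m an integer;
  for m < 0 this is (sigma_{n-1}^{-1} ... sigma_1^{-1})^{-m}.\<close>
definition burau_torus :: "nat \<Rightarrow> int \<Rightarrow> complex \<Rightarrow> complex mat" where
  "burau_torus n m q =
     (if m \<ge> 0 then mat_list_prod n (map (burau_gen n q) [1..<n]) ^\<^sub>m nat m
      else mat_list_prod n (map (burau_gen_inv n q) (rev [1..<n])) ^\<^sub>m nat (- m))"

definition burau_zeta :: "nat \<Rightarrow> complex mat \<Rightarrow> complex \<Rightarrow> complex" where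
  "burau_zeta n B s = inverse (det (1\<^sub>m n - s \<cdot>\<^sub>m B))"

definition q_int :: "nat \<Rightarrow> complex \<Rightarrow> complex" where
  "q_int n q = (1 - q ^ n) / (1 - q)"

definition alexander_torus :: "nat \<Rightarrow> int \<Rightarrow> complex \<Rightarrow> complex" where
  "alexander_torus n k q =
     (1 - q) * (1 - q powi (int n * k)) / ((1 - q ^ n) * (1 - q powi k))"

end

theory Submission imports Defs "HOL-Number_Theory.Cong" begin

lemma det_relabel:
  fixes A :: "complex mat"
  assumes A: "A \<in> carrier_mat n n" and p: "p permutes {0..<n}"
  shows "det (mat n n (\<lambda>(i,j). A $$ (p i, p j))) = det A"
proof -
  define A1 where "A1 = mat n n (\<lambda>(i,j). A $$ (p i, j))"
  have A1: "A1 \<in> carrier_mat n n" unfolding A1_def by simp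
  have d1: "det A1 = signof p * det A" unfolding A1_def by (rule det_permute_rows[OF A p])
  define T where "T = transpose_mat A1"
  have T: "T \<in> carrier_mat n n" unfolding T_def using A1 by simp
  have d2: "det (mat n n (\<lambda>(i,j). T $$ (p i, j))) = signof p * det T"
    by (rule det_permute_rows[OF T p])
  have pn: "\<And>i. i < n \<Longrightarrow> p i < n" using p by (meson atLeastLessThan_iff permutes_in_image zero_le)
  have eq: "mat n n (\<lambda>(i,j). A $$ (p i, p j)) = transpose_mat (mat n n (\<lambda>(i,j). T $$ (p i, j)))"
    by (rule eq_matI, auto simp: T_def A1_def pn)
  have "det (mat n n (\<lambda>(i,j). A $$ (p i, p j))) = det (mat n n (\<lambda>(i,j). T $$ (p i, j)))"
    unfolding eq using det_transpose[of "mat n n (\<lambda>(i,j). T $$ (p i, j))" n] by simp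
  also have "\<dots> = signof p * det T" by (rule d2)
  also have "det T = det A1" unfolding T_def by (rule det_transpose[OF A1])
  finally have "det (mat n n (\<lambda>(i,j). A $$ (p i, p j))) = (signof p * signof p) * det A"
    using d1 by simp
  moreover have "signof p * signof p = (1::complex)" by (cases p rule: sign_cases) auto
  ultimately show ?thesis by simp
qed

definition Pim :: "nat \<Rightarrow> nat \<Rightarrow> complex mat" where
  "Pim n k = mat n n (\<lambda>(r,c). if r = (c + k) mod n then 1 else 0)"

lemma det_shift1:
  fixes y :: complex
  assumes n: "n \<ge> 1"
  shows "det (1\<^sub>m n - y \<cdot>\<^sub>m Pim n 1) = 1 - y ^ n"
proof -
  define L where "L = mat n n (\<lambda>(r,c). if c \<le> r then y ^ (r - c) else 0)"
  define U where "U = mat n n (\<lambda>(r,c). if c = n - 1 then (if r = n - 1 then 1 else 0) - y ^ (r+1)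
     else if r = c then 1 else 0)"
  have L: "L \<in> carrier_mat n n" unfolding L_def by simp
  have A: "1\<^sub>m n - y \<cdot>\<^sub>m Pim n 1 \<in> carrier_mat n n" unfolding Pim_def by (rule minus_carrier_mat, auto)
  have LA: "L * (1\<^sub>m n - y \<cdot>\<^sub>m Pim n 1) = U"
  proof (rule eq_matI)
    fix r c assume r: "r < dim_row U" and c: "c < dim_col U"
    hence r: "r < n" and c: "c < n" unfolding U_def by auto
    have "(L * (1\<^sub>m n - y \<cdot>\<^sub>m Pim n 1)) $$ (r,c) =
       (\<Sum>k<n. L $$ (r,k) * ((if k = c then 1 else 0) - y * (if k = (c+1) mod n then 1 else 0)))"
      using r c unfolding L_def Pim_def
      by (auto simp: times_mat_def scalar_prod_def intro!: sum.cong)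
    also have "\<dots> = (\<Sum>k<n. (if k = c then L $$ (r,k) else 0) - (if k = (c+1) mod n then y * L $$ (r,k) else 0))"
      by (rule sum.cong, auto simp: algebra_simps)
    also have "\<dots> = L $$ (r,c) - y * L $$ (r, (c+1) mod n)"
      using c n by (simp add: sum_subtractf)
    also have "\<dots> = U $$ (r,c)"
    proof (cases "c = n - 1")
      case True
      hence "(c+1) mod n = 0" using n by simp
      then show ?thesis using True r c unfolding L_def U_def by auto
    next
      case False
      hence "(c+1) mod n = c + 1" using c by simp
      moreover have "c + 1 < n" using False c by simp
      moreover have "\<And>r. c < r \<Longrightarrow> y^(r-c) = y * y^(r - Suc c)" by (metis Suc_diff_Suc power_Suc)
      ultimately show ?thesis using False r c unfolding L_def U_def
        by auto
    qed
    finally show "(L * (1\<^sub>m n - y \<cdot>\<^sub>m Pim n 1)) $$ (r,c) = U $$ (r,c)" .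
  qed (auto simp: U_def L_def Pim_def)
  have dL: "det L = 1"
  proof -
    have "diag_mat L = map (\<lambda>i. 1) [0..<n]" by (auto simp: diag_mat_def L_def)
    moreover have "det L = prod_list (diag_mat L)" by (rule det_lower_triangular[OF _ L], auto simp: L_def)
    ultimately show ?thesis by (simp add: map_replicate_const)
  qed
  have U: "upper_triangular U" unfolding U_def upper_triangular_def by auto
  have "det U = prod_list (diag_mat U)" by (rule det_upper_triangular[OF U, of n], simp add: U_def)
  also have "\<dots> = (\<Prod>i<n. U $$ (i,i))" unfolding prod_list_diag_prod
    by (simp add: lessThan_atLeast0 U_def)
  also have "\<dots> = 1 - y ^ n"
  proof -
    have "{..<n} = insert (n-1) {..<n-1}" using n by auto
    hence "(\<Prod>i<n. U $$ (i,i)) = U $$ (n-1,n-1) * (\<Prod>i<n-1. U $$ (i,i))" by simp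
    also have "(\<Prod>i<n-1. U $$ (i,i)) = 1" by (rule prod.neutral, auto simp: U_def)
    finally show ?thesis using n by (simp add: U_def)
  qed
  finally have "det U = 1 - y ^ n" .
  moreover have "det U = det L * det (1\<^sub>m n - y \<cdot>\<^sub>m Pim n 1)"
    unfolding LA[symmetric] by (rule det_mult[OF L A])
  ultimately show ?thesis using dL by simp
qed

lemma mulmod_cancel:
  fixes i j k n :: nat
  assumes "coprime k n"
  shows "(i * k mod n = j * k mod n) \<longleftrightarrow> (i mod n = j mod n)"
  using cong_mult_rcancel_nat[OF assms, of i j] unfolding cong_def .

lemma det_shiftk:
  fixes y :: complex
  assumes n: "n \<ge> 1" and cop: "coprime k n"
  shows "det (1\<^sub>m n - y \<cdot>\<^sub>m Pim n k) = 1 - y ^ n"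
proof -
  define p where "p = (\<lambda>i. if i < n then (i * k) mod n else i)"
  have pn: "\<And>i. i < n \<Longrightarrow> p i < n" unfolding p_def using n by auto
  have c1: "\<And>i j. i < n \<Longrightarrow> j < n \<Longrightarrow> (p i = p j) \<longleftrightarrow> i = j"
    unfolding p_def using mulmod_cancel[OF cop] by auto
  have c2: "\<And>i j. i < n \<Longrightarrow> j < n \<Longrightarrow> (p i = (p j + k) mod n) \<longleftrightarrow> i = (j + 1) mod n"
  proof -
    fix i j assume i: "i < n" and j: "j < n"
    have "(p j + k) mod n = ((j+1) * k) mod n" unfolding p_def using j
      by (simp add: mod_add_right_eq algebra_simps)
    hence "(p i = (p j + k) mod n) \<longleftrightarrow> i mod n = (j+1) mod n"
      using mulmod_cancel[OF cop, of i "j+1"] i unfolding p_def by simp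
    thus "(p i = (p j + k) mod n) \<longleftrightarrow> i = (j + 1) mod n" using i by simp
  qed
  have perm: "p permutes {0..<n}"
    by (rule inj_imp_permutes, auto simp: inj_on_def c1 pn, auto simp: p_def)
  have A: "1\<^sub>m n - y \<cdot>\<^sub>m Pim n k \<in> carrier_mat n n" unfolding Pim_def by (rule minus_carrier_mat, auto)
  have eq: "mat n n (\<lambda>(i,j). (1\<^sub>m n - y \<cdot>\<^sub>m Pim n k) $$ (p i, p j)) = 1\<^sub>m n - y \<cdot>\<^sub>m Pim n 1"
    by (rule eq_matI, auto simp: Pim_def pn c1 c2)
  have "det (1\<^sub>m n - y \<cdot>\<^sub>m Pim n k) = det (1\<^sub>m n - y \<cdot>\<^sub>m Pim n 1)"
    using det_relabel[OF A perm] unfolding eq by simp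
  also have "\<dots> = 1 - y ^ n" by (rule det_shift1[OF n])
  finally show ?thesis .
qed

lemma det_rank1:
  fixes A :: "complex mat" and x :: "nat \<Rightarrow> complex"
  assumes A: "A \<in> carrier_mat n n" and cs: "\<And>c. c < n \<Longrightarrow> (\<Sum>r<n. A $$ (r,c)) = a" and a: "a \<noteq> 0"
  shows "det (A + mat n n (\<lambda>(r,c). x r)) = det A * (1 + (\<Sum>r<n. x r) / a)"
proof -
  define X where "X = mat n n (\<lambda>(r,c). x r)"
  define col where "col = mat n 1 (\<lambda>(r,c). x r)"
  define neg1 where "neg1 = (mat 1 n (\<lambda>_. -1) :: complex mat)"
  define ones where "ones = (mat 1 n (\<lambda>_. 1) :: complex mat)"
  define onesa where "onesa = (mat 1 n (\<lambda>_. 1/a) :: complex mat)"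
  define K where "K = four_block_mat A col neg1 (1\<^sub>m 1)"
  define R where "R = four_block_mat (1\<^sub>m n) (0\<^sub>m n 1) ones (1\<^sub>m 1)"
  define Lf where "Lf = four_block_mat (1\<^sub>m n) (0\<^sub>m n 1) onesa (1\<^sub>m 1)"
  have col: "col \<in> carrier_mat n 1" and neg1: "neg1 \<in> carrier_mat 1 n" and ones: "ones \<in> carrier_mat 1 n"
    and onesa: "onesa \<in> carrier_mat 1 n" and X: "X \<in> carrier_mat n n"
    unfolding col_def neg1_def ones_def onesa_def X_def by auto
  have K: "K \<in> carrier_mat (n+1) (n+1)" unfolding K_def using A by auto
  have R: "R \<in> carrier_mat (n+1) (n+1)" unfolding R_def by auto
  have Lf: "Lf \<in> carrier_mat (n+1) (n+1)" unfolding Lf_def by auto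
  have KR: "K * R = four_block_mat (A * 1\<^sub>m n + col * ones) (A * 0\<^sub>m n 1 + col * 1\<^sub>m 1)
      (neg1 * 1\<^sub>m n + 1\<^sub>m 1 * ones) (neg1 * 0\<^sub>m n 1 + 1\<^sub>m 1 * 1\<^sub>m 1)"
    unfolding K_def R_def by (rule mult_four_block_mat[OF A col neg1 _ _ _ ones], auto)
  have b1: "A * 1\<^sub>m n + col * ones = A + X"
  proof -
    have "col * ones = X"
      by (rule eq_matI, auto simp: col_def ones_def X_def times_mat_def scalar_prod_def)
    thus ?thesis using right_mult_one_mat[OF A] by simp
  qed
  have b2: "A * 0\<^sub>m n 1 + col * 1\<^sub>m 1 = col" using A col by simp
  have b3: "neg1 * 1\<^sub>m n + 1\<^sub>m 1 * ones = 0\<^sub>m 1 n"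
    by (rule eq_matI, auto simp: neg1_def ones_def)
  have b4: "neg1 * 0\<^sub>m n 1 + 1\<^sub>m 1 * 1\<^sub>m 1 = (1\<^sub>m 1 :: complex mat)" using neg1 by simp
  have "det (K * R) = det (A + X) * det (1\<^sub>m 1 :: complex mat)"
    unfolding KR b1 b2 b3 b4
    by (rule det_four_block_mat_lower_left_zero[of _ n _ 1], insert A X col, auto)
  hence d1: "det (K * R) = det (A + X)" by simp
  have "det R = det (1\<^sub>m n :: complex mat) * det (1\<^sub>m 1 :: complex mat)"
    unfolding R_def by (rule det_four_block_mat_upper_right_zero[of _ n _ 1], insert ones, auto)
  hence dR: "det R = 1" by simp
  have "det (K * R) = det K * det R" by (rule det_mult[OF K R])
  with d1 dR have dK1: "det K = det (A + X)" by simp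
  have LK: "Lf * K = four_block_mat (1\<^sub>m n * A + 0\<^sub>m n 1 * neg1) (1\<^sub>m n * col + 0\<^sub>m n 1 * 1\<^sub>m 1)
      (onesa * A + 1\<^sub>m 1 * neg1) (onesa * col + 1\<^sub>m 1 * 1\<^sub>m 1)"
    unfolding K_def Lf_def by (rule mult_four_block_mat[OF _ _ onesa _ A col neg1], auto)
  have e1: "1\<^sub>m n * A + 0\<^sub>m n 1 * neg1 = A" using A neg1 by simp
  have e2: "1\<^sub>m n * col + 0\<^sub>m n 1 * 1\<^sub>m 1 = col" using col by simp
  have e3: "onesa * A + 1\<^sub>m 1 * neg1 = 0\<^sub>m 1 n"
  proof (rule eq_matI)
    fix i j assume "i < dim_row (0\<^sub>m 1 n :: complex mat)" "j < dim_col (0\<^sub>m 1 n :: complex mat)"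
    hence i: "i = 0" and j: "j < n" by auto
    have "(onesa * A) $$ (i,j) = (\<Sum>r<n. A $$ (r,j)) / a"
      using A i j by (auto simp: onesa_def times_mat_def scalar_prod_def sum_divide_distrib lessThan_atLeast0 intro!: sum.cong)
    also have "\<dots> = 1" using cs[OF j] a by simp
    finally show "(onesa * A + 1\<^sub>m 1 * neg1) $$ (i,j) = 0\<^sub>m 1 n $$ (i,j)"
      using i j A neg1 by (simp add: neg1_def)
  qed (insert A neg1 onesa, auto)
  define d where "d = 1 + (\<Sum>r<n. x r) / a"
  have e4: "onesa * col + 1\<^sub>m 1 * 1\<^sub>m 1 = mat 1 1 (\<lambda>_. d)"
    by (rule eq_matI, auto simp: onesa_def col_def d_def times_mat_def scalar_prod_def sum_divide_distrib lessThan_atLeast0 intro!: sum.cong)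
  have "det (Lf * K) = det A * det (mat 1 1 (\<lambda>_. d))"
    unfolding LK e1 e2 e3 e4
    by (rule det_four_block_mat_lower_left_zero[of _ n _ 1], insert A col, auto)
  also have "det (mat 1 1 (\<lambda>_. d)) = d" by (subst det_single, auto)
  finally have d2: "det (Lf * K) = det A * d" .
  have "det Lf = det (1\<^sub>m n :: complex mat) * det (1\<^sub>m 1 :: complex mat)"
    unfolding Lf_def by (rule det_four_block_mat_upper_right_zero[of _ n _ 1], insert onesa, auto)
  hence dL: "det Lf = 1" by simp
  have "det (Lf * K) = det Lf * det K" by (rule det_mult[OF Lf K])
  with d2 dL dK1 show ?thesis unfolding X_def d_def by simp
qed

definition shape :: "nat \<Rightarrow> complex \<Rightarrow> nat \<Rightarrow> (nat \<Rightarrow> complex) \<Rightarrow> complex mat" where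
  "shape n l k x = mat n n (\<lambda>(r,c). l * (if r = (c + k) mod n then 1 else 0) + x r)"

lemma det_shape:
  fixes s l :: complex
  assumes n: "n \<ge> 1" and cop: "coprime k n" and sx: "l + (\<Sum>r<n. x r) = 1" and sl: "s * l \<noteq> 1"
  shows "det (1\<^sub>m n - s \<cdot>\<^sub>m shape n l k x) = (1 - (s*l)^n) * (1 - s) / (1 - s*l)"
proof -
  define y where "y = s * l"
  define A where "A = 1\<^sub>m n - y \<cdot>\<^sub>m Pim n k"
  have A: "A \<in> carrier_mat n n" unfolding A_def Pim_def by (rule minus_carrier_mat, auto)
  have eq: "1\<^sub>m n - s \<cdot>\<^sub>m shape n l k x = A + mat n n (\<lambda>(r,c). - s * x r)"
    by (rule eq_matI, auto simp: A_def Pim_def shape_def y_def algebra_simps)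
  have cs: "(\<Sum>r<n. A $$ (r,c)) = 1 - y" if c: "c < n" for c
  proof -
    have "(\<Sum>r<n. A $$ (r,c)) = (\<Sum>r<n. (if r = c then 1 else 0) - (if r = (c+k) mod n then y else 0))"
      using c by (auto simp: A_def Pim_def intro!: sum.cong)
    also have "\<dots> = 1 - y" using c n by (simp add: sum_subtractf)
    finally show ?thesis .
  qed
  have y1: "1 - y \<noteq> 0" using sl unfolding y_def by simp
  have "det (A + mat n n (\<lambda>(r,c). - s * x r)) = det A * (1 + (\<Sum>r<n. - s * x r) / (1 - y))"
    by (rule det_rank1[OF A cs y1])
  also have "det A = 1 - y ^ n" unfolding A_def by (rule det_shiftk[OF n cop])
  also have "(\<Sum>r<n. - s * x r) = - s * (1 - l)" proof -
    have "(\<Sum>r<n. - s * x r) = - s * (\<Sum>r<n. x r)" by (simp add: sum_distrib_left)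
    also have "(\<Sum>r<n. x r) = 1 - l" using sx by (simp add: algebra_simps)
    finally show ?thesis .
  qed
  also have "1 + - s * (1 - l) / (1 - y) = (1 - s) / (1 - y)"
    using y1 unfolding y_def by (simp add: field_simps)
  finally show ?thesis unfolding eq y_def by simp
qed

lemma shape_carrier[simp]: "shape n l k x \<in> carrier_mat n n"
  unfolding shape_def by simp

lemma shape_mult:
  assumes n: "n \<ge> 1" and sx: "l + (\<Sum>r<n. x r) = 1" and sy: "m + (\<Sum>r<n. y r) = 1"
  shows "\<exists>z. shape n l k x * shape n m j y = shape n (l*m) (k+j) z \<and> l*m + (\<Sum>r<n. z r) = 1"
proof -
  define z where "z r = l * (\<Sum>i<n. (if r = (i+k) mod n then y i else 0)) + m * x r + x r * (\<Sum>i<n. y i)" for r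
  have "shape n l k x * shape n m j y = shape n (l*m) (k+j) z"
  proof (rule eq_matI)
    fix r c assume "r < dim_row (shape n (l*m) (k+j) z)" "c < dim_col (shape n (l*m) (k+j) z)"
    hence r: "r < n" and c: "c < n" by (auto simp: shape_def)
    have "(shape n l k x * shape n m j y) $$ (r,c) =
      (\<Sum>i<n. (l * (if r = (i + k) mod n then 1 else 0) + x r) * (m * (if i = (c + j) mod n then 1 else 0) + y i))"
      using r c by (auto simp: shape_def times_mat_def scalar_prod_def lessThan_atLeast0 intro!: sum.cong)
    also have "\<dots> = (\<Sum>i<n. (if i = (c+j) mod n then l*m*(if r = (i + k) mod n then 1 else 0) else 0)
        + (if r = (i+k) mod n then l * y i else 0) + (if i = (c+j) mod n then m * x r else 0) + x r * y i)"
      by (rule sum.cong, auto simp: algebra_simps)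
    also have "\<dots> = l*m*(if r = ((c+j) mod n + k) mod n then 1 else 0) + l * (\<Sum>i<n. (if r = (i+k) mod n then y i else 0))
        + m * x r + x r * (\<Sum>i<n. y i)"
      using n by (simp add: sum.distrib sum_distrib_left if_distrib[of "\<lambda>t. l * t"] cong: if_cong)
    also have "((c+j) mod n + k) mod n = (c + (k+j)) mod n" by (metis mod_add_left_eq add.commute add.left_commute)
    finally show "(shape n l k x * shape n m j y) $$ (r,c) = shape n (l*m) (k+j) z $$ (r,c)"
      using r c by (simp add: shape_def z_def algebra_simps)
  qed (auto simp: shape_def)
  moreover have "l*m + (\<Sum>r<n. z r) = 1"
  proof -
    have sw: "(\<Sum>r<n. \<Sum>i<n. (if r = (i+k) mod n then y i else 0)) = (\<Sum>i<n. y i)"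
      by (subst sum.swap, rule sum.cong, auto simp: n)
    have "(\<Sum>r<n. z r) = l * (\<Sum>i<n. y i) + m * (\<Sum>r<n. x r) + (\<Sum>r<n. x r) * (\<Sum>i<n. y i)"
      unfolding z_def by (simp add: sum.distrib sum_distrib_left[symmetric] sum_distrib_right[symmetric] sw)
    also have "(\<Sum>i<n. y i) = 1 - m" using sy by (simp add: algebra_simps)
    also have "(\<Sum>r<n. x r) = 1 - l" using sx by (simp add: algebra_simps)
    finally show ?thesis by (simp add: algebra_simps)
  qed
  ultimately show ?thesis by blast
qed

lemma mat_list_prod_Cons: "mat_list_prod n (A # As) = A * mat_list_prod n As"
  unfolding mat_list_prod_def by simp

lemma mat_list_prod_Nil: "mat_list_prod n [] = 1\<^sub>m n"
  unfolding mat_list_prod_def by simp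

lemma gen_mult_entry:
  assumes i: "1 \<le> i" "i < n" and M: "M \<in> carrier_mat n n" and r: "r < n" and c: "c < n"
  shows "(burau_gen n q i * M) $$ (r,c) = (if r = i - 1 then (1-q) * M $$ (i-1,c) + M $$ (i,c)
     else if r = i then q * M $$ (i-1,c) else M $$ (r,c))"
proof -
  have "(burau_gen n q i * M) $$ (r,c) = (\<Sum>k<n. burau_gen n q i $$ (r,k) * M $$ (k,c))"
    using M r c by (auto simp: burau_gen_def times_mat_def scalar_prod_def lessThan_atLeast0 intro!: sum.cong)
  also have "\<dots> = (if r = i - 1 then (1-q) * M $$ (i-1,c) + M $$ (i,c)
     else if r = i then q * M $$ (i-1,c) else M $$ (r,c))"
  proof (cases "r = i - 1")
    case True
    have "(\<Sum>k<n. burau_gen n q i $$ (r,k) * M $$ (k,c)) =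
       (\<Sum>k<n. (if k = i - 1 then (1-q) * M $$ (k,c) else 0) + (if k = i then M $$ (k,c) else 0))"
      using True i r by (intro sum.cong, auto simp: burau_gen_def)
    also have "\<dots> = (1-q) * M $$ (i-1,c) + M $$ (i,c)" using i by (simp add: sum.distrib)
    finally show ?thesis using True by simp
  next
    case F: False
    show ?thesis
    proof (cases "r = i")
      case True
      have "(\<Sum>k<n. burau_gen n q i $$ (r,k) * M $$ (k,c)) =
         (\<Sum>k<n. (if k = i - 1 then q * M $$ (k,c) else 0))"
        using True i r by (intro sum.cong, auto simp: burau_gen_def)
      also have "\<dots> = q * M $$ (i-1,c)" using i by simp
      finally show ?thesis using True F by simp
    next
      case False
      have "(\<Sum>k<n. burau_gen n q i $$ (r,k) * M $$ (k,c)) =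
         (\<Sum>k<n. (if k = r then M $$ (k,c) else 0))"
        using False F i r by (intro sum.cong, auto simp: burau_gen_def)
      also have "\<dots> = M $$ (r,c)" using r by simp
      finally show ?thesis using False F by simp
    qed
  qed
  finally show ?thesis .
qed

lemma geninv_mult_entry:
  assumes i: "1 \<le> i" "i < n" and M: "M \<in> carrier_mat n n" and r: "r < n" and c: "c < n"
  shows "(burau_gen_inv n q i * M) $$ (r,c) = (if r = i - 1 then (1/q) * M $$ (i,c)
     else if r = i then M $$ (i-1,c) + (1 - 1/q) * M $$ (i,c) else M $$ (r,c))"
proof -
  have "(burau_gen_inv n q i * M) $$ (r,c) = (\<Sum>k<n. burau_gen_inv n q i $$ (r,k) * M $$ (k,c))"
    using M r c by (auto simp: burau_gen_inv_def times_mat_def scalar_prod_def lessThan_atLeast0 intro!: sum.cong)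
  also have "\<dots> = (if r = i - 1 then (1/q) * M $$ (i,c)
     else if r = i then M $$ (i-1,c) + (1 - 1/q) * M $$ (i,c) else M $$ (r,c))"
  proof (cases "r = i - 1")
    case True
    have "(\<Sum>k<n. burau_gen_inv n q i $$ (r,k) * M $$ (k,c)) =
       (\<Sum>k<n. (if k = i then (1/q) * M $$ (k,c) else 0))"
      using True i r by (intro sum.cong, auto simp: burau_gen_inv_def)
    also have "\<dots> = (1/q) * M $$ (i,c)" using i by simp
    finally show ?thesis using True by simp
  next
    case F: False
    show ?thesis
    proof (cases "r = i")
      case True
      have "(\<Sum>k<n. burau_gen_inv n q i $$ (r,k) * M $$ (k,c)) =
         (\<Sum>k<n. (if k = i - 1 then M $$ (k,c) else 0) + (if k = i then (1 - 1/q) * M $$ (k,c) else 0))"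
        using True i r by (intro sum.cong, auto simp: burau_gen_inv_def)
      also have "\<dots> = M $$ (i-1,c) + (1 - 1/q) * M $$ (i,c)" using i by (simp add: sum.distrib)
      finally show ?thesis using True F by simp
    next
      case False
      have "(\<Sum>k<n. burau_gen_inv n q i $$ (r,k) * M $$ (k,c)) =
         (\<Sum>k<n. (if k = r then M $$ (k,c) else 0))"
        using False F i r by (intro sum.cong, auto simp: burau_gen_inv_def)
      also have "\<dots> = M $$ (r,c)" using r by simp
      finally show ?thesis using False F by simp
    qed
  qed
  finally show ?thesis .
qed

definition Sform :: "nat \<Rightarrow> complex \<Rightarrow> nat \<Rightarrow> complex mat" where
  "Sform n q j = mat n n (\<lambda>(r,c). if j - 1 \<le> r \<and> j - 1 \<le> c then
      (if r = j - 1 then (if c = n - 1 then 1 else 1 - q) else (if c = r - 1 then q else 0))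
      else (if r = c then 1 else 0))"

lemma Sform_prod:
  assumes "1 \<le> j" "j \<le> n"
  shows "mat_list_prod n (map (burau_gen n q) [j..<n]) = Sform n q j"
  using assms
proof (induction "n - j" arbitrary: j)
  case 0
  hence j: "j = n" by simp
  show ?case unfolding j by (simp add: mat_list_prod_Nil, intro eq_matI, auto simp: Sform_def)
next
  case (Suc d)
  hence j: "j < n" "1 \<le> j" by auto
  have IH: "mat_list_prod n (map (burau_gen n q) [Suc j..<n]) = Sform n q (Suc j)"
    using Suc by auto
  have "[j..<n] = j # [Suc j..<n]" using j by (simp add: upt_conv_Cons)
  hence "mat_list_prod n (map (burau_gen n q) [j..<n]) = burau_gen n q j * Sform n q (Suc j)"
    by (simp add: mat_list_prod_Cons IH)
  also have "\<dots> = Sform n q j"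
  proof (rule eq_matI)
    fix r c assume "r < dim_row (Sform n q j)" "c < dim_col (Sform n q j)"
    hence r: "r < n" and c: "c < n" by (auto simp: Sform_def)
    have e: "(burau_gen n q j * Sform n q (Suc j)) $$ (r,c) = (if r = j - 1 then (1-q) * Sform n q (Suc j) $$ (j-1,c) + Sform n q (Suc j) $$ (j,c)
     else if r = j then q * Sform n q (Suc j) $$ (j-1,c) else Sform n q (Suc j) $$ (r,c))"
      by (rule gen_mult_entry[OF j(2) j(1) _ r c], simp add: Sform_def)
    have s1: "Sform n q (Suc j) $$ (j-1,c) = (if c = j - 1 then 1 else 0)" using j c by (simp add: Sform_def)
    have s2: "Sform n q (Suc j) $$ (j,c) = (if j \<le> c then (if c = n - 1 then 1 else 1 - q) else 0)"
      using j c by (simp add: Sform_def)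
    consider "r < j - 1" | "r = j - 1" | "r = j" | "r > j" by linarith
    then show "(burau_gen n q j * Sform n q (Suc j)) $$ (r,c) = Sform n q j $$ (r,c)"
    proof cases
      case 1 thus ?thesis unfolding e using r c j by (auto simp: Sform_def)
    next
      case 2 thus ?thesis unfolding e s1 s2 using r c j by (auto simp: Sform_def)
    next
      case 3 thus ?thesis unfolding e s1 s2 using r c j by (auto simp: Sform_def)
    next
      case 4 thus ?thesis unfolding e using r c j by (auto simp: Sform_def)
    qed
  qed (auto simp: Sform_def burau_gen_def)
  finally show ?case .
qed

definition Cform :: "nat \<Rightarrow> complex \<Rightarrow> nat \<Rightarrow> complex mat" where
  "Cform n q j = mat n n (\<lambda>(r,c). if r \<le> j \<and> c \<le> j then
      (if r = j then (if c = 0 then 1 else 1 - 1/q) else (if c = r + 1 then 1/q else 0))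
      else (if r = c then 1 else 0))"

lemma Cform_prod:
  assumes "j < n"
  shows "mat_list_prod n (map (burau_gen_inv n q) (rev [1..<Suc j])) = Cform n q j"
  using assms
proof (induction j)
  case 0
  show ?case by (simp add: mat_list_prod_Nil, rule eq_matI, auto simp: Cform_def)
next
  case (Suc j)
  hence j: "Suc j < n" by auto
  have IH: "mat_list_prod n (map (burau_gen_inv n q) (rev [1..<Suc j])) = Cform n q j"
    using Suc by auto
  have "map (burau_gen_inv n q) (rev [1..<Suc (Suc j)]) = burau_gen_inv n q (Suc j) # map (burau_gen_inv n q) (rev [1..<Suc j])" by simp
  hence "mat_list_prod n (map (burau_gen_inv n q) (rev [1..<Suc (Suc j)])) = burau_gen_inv n q (Suc j) * Cform n q j"
    by (simp only: mat_list_prod_Cons IH)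
  also have "\<dots> = Cform n q (Suc j)"
  proof (rule eq_matI)
    fix r c assume "r < dim_row (Cform n q (Suc j))" "c < dim_col (Cform n q (Suc j))"
    hence r: "r < n" and c: "c < n" by (auto simp: Cform_def)
    have j1: "1 \<le> Suc j" by simp
    have e: "(burau_gen_inv n q (Suc j) * Cform n q j) $$ (r,c) = (if r = Suc j - 1 then (1/q) * Cform n q j $$ (Suc j,c)
     else if r = Suc j then Cform n q j $$ (Suc j - 1,c) + (1 - 1/q) * Cform n q j $$ (Suc j,c) else Cform n q j $$ (r,c))"
      by (rule geninv_mult_entry[OF j1 j _ r c], simp add: Cform_def)
    have s1: "Cform n q j $$ (Suc j,c) = (if c = Suc j then 1 else 0)" using j c by (simp add: Cform_def)
    have s2: "Cform n q j $$ (j,c) = (if c \<le> j then (if c = 0 then 1 else 1 - 1/q) else 0)"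
      using j c by (simp add: Cform_def)
    consider "r < j" | "r = j" | "r = Suc j" | "r > Suc j" by linarith
    then show "(burau_gen_inv n q (Suc j) * Cform n q j) $$ (r,c) = Cform n q (Suc j) $$ (r,c)"
    proof cases
      case 1 thus ?thesis unfolding e using r c j by (auto simp: Cform_def)
    next
      case 2 thus ?thesis unfolding e s1 using r c j by (auto simp: Cform_def)
    next
      case 3 thus ?thesis unfolding e s1 s2 using r c j by (auto simp: Cform_def)
    next
      case 4 thus ?thesis unfolding e using r c j by (auto simp: Cform_def)
    qed
  qed (auto simp: Cform_def burau_gen_inv_def)
  finally show ?case .
qed

lemma shape_index: "r < n \<Longrightarrow> c < n \<Longrightarrow> shape n l k x $$ (r,c) = l * (if r = (c + k) mod n then 1 else 0) + x r"
  unfolding shape_def by simp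

lemma B_shape:
  assumes n: "n \<ge> 2"
  shows "mat_list_prod n (map (burau_gen n q) [1..<n]) = shape n q 1 (\<lambda>r. if r = 0 then 1 - q else 0)"
proof -
  have "mat_list_prod n (map (burau_gen n q) [1..<n]) = Sform n q 1" by (rule Sform_prod, insert n, auto)
  also have "\<dots> = shape n q 1 (\<lambda>r. if r = 0 then 1 - q else 0)"
  proof (rule eq_matI)
    fix r c assume "r < dim_row (shape n q 1 (\<lambda>r. if r = 0 then 1 - q else 0))"
      "c < dim_col (shape n q 1 (\<lambda>r. if r = 0 then 1 - q else 0))"
    hence r: "r < n" and c: "c < n" by (auto simp: shape_def)
    have m: "(c + 1) mod n = (if c = n - 1 then 0 else c + 1)" using c n by auto
    show "Sform n q 1 $$ (r,c) = shape n q 1 (\<lambda>r. if r = 0 then 1 - q else 0) $$ (r,c)"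
      unfolding shape_index[OF r c] m using r c n unfolding Sform_def by auto
  qed (auto simp: Sform_def shape_def)
  finally show ?thesis .
qed

lemma C_shape:
  assumes n: "n \<ge> 2"
  shows "mat_list_prod n (map (burau_gen_inv n q) (rev [1..<n])) = shape n (1/q) (n-1) (\<lambda>r. if r = n - 1 then 1 - 1/q else 0)"
proof -
  have "mat_list_prod n (map (burau_gen_inv n q) (rev [1..<Suc (n-1)])) = Cform n q (n-1)" by (rule Cform_prod, insert n, auto)
  moreover have "Suc (n - 1) = n" using n by simp
  ultimately have "mat_list_prod n (map (burau_gen_inv n q) (rev [1..<n])) = Cform n q (n-1)" by simp
  also have "\<dots> = shape n (1/q) (n-1) (\<lambda>r. if r = n - 1 then 1 - 1/q else 0)"
  proof (rule eq_matI)
    fix r c assume "r < dim_row (shape n (1/q) (n-1) (\<lambda>r. if r = n - 1 then 1 - 1/q else 0))"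
      "c < dim_col (shape n (1/q) (n-1) (\<lambda>r. if r = n - 1 then 1 - 1/q else 0))"
    hence r: "r < n" and c: "c < n" by (auto simp: shape_def)
    have m: "(c + (n - 1)) mod n = (if c = 0 then n - 1 else c - 1)"
    proof (cases "c = 0")
      case False
      hence "c + (n - 1) = (c - 1) + n" using n by simp
      hence "(c + (n - 1)) mod n = (c - 1) mod n" by simp
      thus ?thesis using False c by simp
    qed (insert n, simp)
    show "Cform n q (n-1) $$ (r,c) = shape n (1/q) (n-1) (\<lambda>r. if r = n - 1 then 1 - 1/q else 0) $$ (r,c)"
      unfolding shape_index[OF r c] m using r c n unfolding Cform_def by auto
  qed (auto simp: Cform_def shape_def)
  finally show ?thesis .
qed

lemma shape_pow:
  assumes n: "n \<ge> 1" and sx: "l + (\<Sum>r<n. x r) = 1"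
  shows "\<exists>z. shape n l k x ^\<^sub>m p = shape n (l^p) (k*p) z \<and> l^p + (\<Sum>r<n. z r) = 1"
proof (induction p)
  case 0
  have "shape n l k x ^\<^sub>m 0 = shape n 1 0 (\<lambda>_. 0)"
    by (simp, rule eq_matI, auto simp: shape_def)
  thus ?case by auto
next
  case (Suc p)
  then obtain z where z: "shape n l k x ^\<^sub>m p = shape n (l^p) (k*p) z" "l^p + (\<Sum>r<n. z r) = 1" by auto
  obtain w where w: "shape n (l^p) (k*p) z * shape n l k x = shape n (l^p * l) (k*p + k) w"
     "l^p * l + (\<Sum>r<n. w r) = 1"
    using shape_mult[OF n z(2) sx, of "k*p" k] by auto
  have "shape n l k x ^\<^sub>m Suc p = shape n (l^Suc p) (k * Suc p) w"
    using z(1) w(1) by (simp add: ac_simps)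
  thus ?case using w(2) by (auto simp: ac_simps)
qed

lemma powi_ne1:
  fixes q :: complex
  assumes q0: "q \<noteq> 0" and q: "\<forall>k::nat. k > 0 \<longrightarrow> q ^ k \<noteq> 1" and z: "z \<noteq> 0"
  shows "q powi z \<noteq> 1"
proof (cases "z > 0")
  case True
  hence "q powi z = q ^ nat z" by (simp add: power_int_def)
  thus ?thesis using q True by simp
next
  case False
  hence "q powi z = inverse (q ^ nat (-z))" using z by (simp add: power_int_def power_inverse)
  moreover have "q ^ nat (-z) \<noteq> 1" using q False z by simp
  ultimately show ?thesis by (metis inverse_1 inverse_inverse_eq)
qed


lemma burau_torus_shape:
  fixes q :: complex
  assumes n: "n \<ge> 2" and g: "gcd (int n) m = 1" and q0: "q \<noteq> 0"
  shows "\<exists>sh x. burau_torus n m q = shape n (q powi m) sh x \<and> q powi m + (\<Sum>r<n. x r) = 1 \<and> coprime sh n"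
proof (cases "m \<ge> 0")
  case True
  have sx: "q + (\<Sum>r<n. (\<lambda>r. if r = 0 then 1 - q else 0) r) = 1" using n by simp
  obtain z where z: "shape n q 1 (\<lambda>r. if r = 0 then 1 - q else 0) ^\<^sub>m nat m = shape n (q ^ nat m) (1 * nat m) z"
     "q ^ nat m + (\<Sum>r<n. z r) = 1"
    using shape_pow[OF _ sx, of 1 "nat m"] n by auto
  have bt: "burau_torus n m q = shape n (q ^ nat m) (nat m) z"
    unfolding burau_torus_def using True B_shape[OF n, of q] z(1) by simp
  have "q ^ nat m = q powi m" using True by (simp add: power_int_def)
  moreover have "coprime (nat m) n"
  proof -
    have "coprime (int n) (int (nat m))" using g True by (simp add: coprime_iff_gcd_eq_1)
    thus ?thesis by (metis coprime_int_iff coprime_commute)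
  qed
  ultimately show ?thesis using bt z(2) by metis
next
  case False
  have sx: "1/q + (\<Sum>r<n. (\<lambda>r. if r = n - 1 then 1 - 1/q else 0) r) = 1" using n by simp
  obtain z where z: "shape n (1/q) (n-1) (\<lambda>r. if r = n - 1 then 1 - 1/q else 0) ^\<^sub>m nat (-m)
      = shape n ((1/q) ^ nat (-m)) ((n-1) * nat (-m)) z"
     "(1/q) ^ nat (-m) + (\<Sum>r<n. z r) = 1"
    using shape_pow[OF _ sx, of "n-1" "nat (-m)"] n by auto
  have bt: "burau_torus n m q = shape n ((1/q) ^ nat (-m)) ((n-1) * nat (-m)) z"
    unfolding burau_torus_def using False C_shape[OF n, of q] z(1) by simp
  have "(1/q) ^ nat (-m) = q powi m" using False by (simp add: power_int_def inverse_eq_divide)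
  moreover have "coprime ((n-1) * nat (-m)) n"
  proof -
    have "coprime (int n) (int (nat (-m)))" using g False by (simp add: coprime_iff_gcd_eq_1)
    hence c1: "coprime (nat (-m)) n" by (metis coprime_int_iff coprime_commute)
    have c2: "coprime (n-1) n" using n coprime_diff_one_left_nat[of n] by linarith
    show ?thesis using c1 c2 by simp
  qed
  ultimately show ?thesis using bt z(2) by metis
qed

theorem corollary3p3:
  fixes n :: nat and m m' :: int and q :: complex
  assumes "n \<ge> 2" and "m' \<noteq> 0"
    and "gcd (int n) m = 1" and "gcd (int n) (m + m') = 1"
    and "q \<noteq> 0" and "\<forall>k::nat. k > 0 \<longrightarrow> q ^ k \<noteq> 1"
  shows "alexander_torus n (m + m') q
         = 1 / (q_int n q * (1 - q powi m')) * inverse (burau_zeta n (burau_torus n m q) (q powi m'))"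
proof -
  note n = assms(1) and m' = assms(2) and g = assms(3) and g2 = assms(4) and q0 = assms(5) and qk = assms(6)
  have k0: "m + m' \<noteq> 0"
  proof
    assume "m + m' = 0"
    hence "int n = 1" using g2 by simp
    thus False using n by simp
  qed
  obtain sh x where M: "burau_torus n m q = shape n (q powi m) sh x" and sx: "q powi m + (\<Sum>r<n. x r) = 1"
    and cop: "coprime sh n" using burau_torus_shape[OF n g q0] by blast
  define s where "s = q powi m'"
  define t where "t = q powi (m + m')"
  have st: "s * q powi m = t" unfolding s_def t_def using q0 by (simp add: power_int_add)
  have t1: "t \<noteq> 1" unfolding t_def by (rule powi_ne1[OF q0 qk k0])
  have s1: "s \<noteq> 1" unfolding s_def by (rule powi_ne1[OF q0 qk m'])
  have q1: "q \<noteq> 1" using qk[rule_format, of 1] by simp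
  have qn1: "q ^ n \<noteq> 1" using qk n by simp
  have "det (1\<^sub>m n - s \<cdot>\<^sub>m shape n (q powi m) sh x) = (1 - (s * q powi m)^n) * (1 - s) / (1 - s * q powi m)"
    by (rule det_shape, insert n cop sx st t1, auto)
  hence D: "inverse (burau_zeta n (burau_torus n m q) s) = (1 - t^n) * (1 - s) / (1 - t)"
    unfolding burau_zeta_def M st by simp
  have A: "alexander_torus n (m + m') q = (1 - q) * (1 - t ^ n) / ((1 - q ^ n) * (1 - t))"
  proof -
    have "q powi (int n * (m + m')) = t ^ n" unfolding t_def
      by (metis mult.commute power_int_mult power_int_of_nat)
    thus ?thesis unfolding alexander_torus_def t_def[symmetric] by simp
  qed
  have nz: "1 - q \<noteq> 0" "1 - q^n \<noteq> 0" "1 - s \<noteq> 0" "1 - t \<noteq> 0" using q1 qn1 s1 t1 by auto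
  show ?thesis unfolding s_def[symmetric] D A q_int_def
    using nz by (simp add: divide_simps)
qed

end
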